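(* Assume $g$ is bounded and $J_s=\emptyset$. Then for $c\in[0,R(1/\lambda_{\max}))$, any $G\in C(\mathbb T)$ and $\delta>0$, $$\lim_{N\to\infty}\mathcal R^N_c\Big[\Big|\langle G,\pi^N\rangle-\int_{\mathbb T}G(x)c\,dx\Big|>\delta\Big]=0 .$$
   Context: $\mathbb N_0=\{0,1,\dots\}$, $\mathbb T=[0,1)$ unit torus. $g:\mathbb N_0\to[0,\infty)$ with $g(n)=0$ iff $n=0$, $|g(n+1)-g(n)|\le g^*$, nondecreasing, $g(n)\to1$ (bounded case). $g(n)!=\prod_{i\le n}g(i)$, $g(0)!=1$, $Z(\phi)=\sum_n\phi^n/g(n)!$ and $\mathcal P_\phi(n)=\phi^n/(g(n)!Z(\phi))$ for $\phi\in[0,1)$, $R(\phi)$ the mean of $\mathcal P_\phi$, $\Phi=R^{-1}$. Finite index set $J$ with pairwise distinct $x_j\in\mathbb T$, $\beta_j\in\mathbb R$, $\lambda_j>0$; $J_s=\{j:\beta_j>0\}$ (assumed empty, i.e. $\beta_j\le0$), $J_c=\{j:\beta_j=0,\lambda_j>1\}$; $\lambda_{\max}=\max_{j\in J_c}\lambda_j$ if $J_c\ne\emptyset$, else $\lambda_{\max}=1$. $\mathbb T_N=\mathbb Z/N\mathbb Z$, $k_{j,N}=\lfloor x_jN\rfloor$, $\mathfrak D_N=\{k_{j,N}\}$. $\mathcal R^N_c$ is the product measure on $\mathbb N_0^{\mathbb T_N}$ with marginals $\mathcal P_{\Phi(c)}$ at $k\notin\mathfrak D_N$ and $\mathcal P_{\lambda_jN^{\beta_j}\Phi(c)}$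 at $k_{j,N}$. $\pi^N=N^{-1}\sum_{k\in\mathbb T_N}\xi(k)\delta_{k/N}$. *)

theory Defs
  imports "HOL-Probability.Probability"
begin

definition gfact :: "(nat \<Rightarrow> real) \<Rightarrow> nat \<Rightarrow> real" where
  "gfact g n = (\<Prod>i\<in>{1..n}. g i)"

definition Zpart :: "(nat \<Rightarrow> real) \<Rightarrow> real \<Rightarrow> real" where
  "Zpart g \<phi> = (\<Sum>n. \<phi> ^ n / gfact g n)"

definition Pdist :: "(nat \<Rightarrow> real) \<Rightarrow> real \<Rightarrow> nat \<Rightarrow> real" where
  "Pdist g \<phi> n = \<phi> ^ n / (gfact g n * Zpart g \<phi>)"

definition Rmean :: "(nat \<Rightarrow> real) \<Rightarrow> real \<Rightarrow> real" where
  "Rmean g \<phi> = (\<Sum>n. real n * Pdist g \<phi> n)"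

definition Phi :: "(nat \<Rightarrow> real) \<Rightarrow> real \<Rightarrow> real" where
  "Phi g c = (THE \<phi>. 0 \<le> \<phi> \<and> \<phi> < 1 \<and> Rmean g \<phi> = c)"

definition Jcrit :: "'j set \<Rightarrow> ('j \<Rightarrow> real) \<Rightarrow> ('j \<Rightarrow> real) \<Rightarrow> 'j set" where
  "Jcrit J \<beta> lam = {j \<in> J. \<beta> j = 0 \<and> lam j > 1}"

definition lambda_max :: "'j set \<Rightarrow> ('j \<Rightarrow> real) \<Rightarrow> ('j \<Rightarrow> real) \<Rightarrow> real" where
  "lambda_max J \<beta> lam = (if Jcrit J \<beta> lam = {} then 1 else Max (lam ` Jcrit J \<beta> lam))"

definition ksite :: "real \<Rightarrow> nat \<Rightarrow> nat" where
  "ksite xj N = nat \<lfloor>xj * real N\<rfloor>"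

text \<open>Fugacity at site k of T_N: lambda_j N^beta_j Phi(c) at k = k_{j,N}, else Phi(c).
  (For the finitely many small N where two defect sites may coincide, an arbitrary
  one of the defects is chosen; this does not affect the limit.)\<close>
definition site_fug :: "(nat \<Rightarrow> real) \<Rightarrow> 'j set \<Rightarrow> ('j \<Rightarrow> real) \<Rightarrow> ('j \<Rightarrow> real) \<Rightarrow> ('j \<Rightarrow> real)
    \<Rightarrow> real \<Rightarrow> nat \<Rightarrow> nat \<Rightarrow> real" where
  "site_fug g J x \<beta> lam c N k =
     (if \<exists>j\<in>J. k = ksite (x j) N
      then (let j = (SOME j. j \<in> J \<and> k = ksite (x j) N) in lam j * real N powr \<beta> j * Phi g c)
      else Phi g c)"

definition RN :: "(nat \<Rightarrow> real) \<Rightarrow> 'j set \<Rightarrow> ('j \<Rightarrow> real) \<Rightarrow> ('j \<Rightarrow> real) \<Rightarrow> ('j \<Rightarrow> real)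
    \<Rightarrow> real \<Rightarrow> nat \<Rightarrow> (nat \<Rightarrow> nat) measure" where
  "RN g J x \<beta> lam c N =
     PiM {..<N} (\<lambda>k. point_measure (UNIV :: nat set)
        (\<lambda>n. ennreal (Pdist g (site_fug g J x \<beta> lam c N k) n)))"

definition pairing_emp :: "(real \<Rightarrow> real) \<Rightarrow> nat \<Rightarrow> (nat \<Rightarrow> nat) \<Rightarrow> real" where
  "pairing_emp G N \<xi> = (1 / real N) * (\<Sum>k<N. real (\<xi> k) * G (real k / real N))"

end

theory Submission
  imports Defs "HOL-Real_Asymp.Real_Asymp"
begin



locale gass =
  fixes g :: "nat \<Rightarrow> real"
  assumes gpos: "\<And>n. 0 < n \<Longrightarrow> 0 < g n"
    and gle1: "\<And>n. g n \<le> 1"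
    and glim: "g \<longlonglongrightarrow> 1"
begin

lemma gfact_pos: "0 < gfact g n"
  unfolding gfact_def by (rule prod_pos) (auto intro: gpos)

lemma gfact_le1: "gfact g n \<le> 1"
  unfolding gfact_def by (rule prod_le_1) (auto intro: gle1 less_imp_le[OF gpos])

lemma gfact_Suc: "gfact g (Suc n) = gfact g n * g (Suc n)"
  unfolding gfact_def by (simp add: prod.nat_ivl_Suc' mult.commute)

lemma summable_mom:
  assumes "0 \<le> \<phi>" "\<phi> < 1"
  shows "summable (\<lambda>n. real n ^ k * (\<phi> ^ n / gfact g n))"
proof -
  define r where "r n = (real (Suc n) / real n) ^ k * \<phi> / g (Suc n)" for n
  have "(\<lambda>n. (real (Suc n) / real n) ^ k) \<longlonglongrightarrow> 1 ^ k"
    by (intro tendsto_power) real_asymp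
  moreover have "(\<lambda>n. g (Suc n)) \<longlonglongrightarrow> 1" using glim by (rule LIMSEQ_Suc)
  ultimately have "r \<longlonglongrightarrow> 1 ^ k * \<phi> / 1" unfolding r_def
    by (intro tendsto_divide tendsto_mult tendsto_const) auto
  hence "r \<longlonglongrightarrow> \<phi>" by simp
  moreover have "\<phi> < (1 + \<phi>) / 2" using assms by simp
  ultimately have "eventually (\<lambda>n. r n < (1 + \<phi>) / 2) sequentially"
    by (rule order_tendstoD)
  then obtain N0 where N0: "\<And>n. n \<ge> N0 \<Longrightarrow> r n < (1 + \<phi>) / 2"
    by (auto simp: eventually_sequentially)
  show ?thesis
  proof (rule summable_ratio_test[where c = "(1+\<phi>)/2" and N = "max 1 N0"])
    show "(1 + \<phi>) / 2 < 1" using assms by simp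
    fix n assume n: "max 1 N0 \<le> n"
    have gp: "0 < g (Suc n)" by (rule gpos) simp
    have gf: "0 < gfact g n" by (rule gfact_pos)
    have eq: "real (Suc n) ^ k * (\<phi> ^ Suc n / gfact g (Suc n)) = r n * (real n ^ k * (\<phi> ^ n / gfact g n))"
      using n gp gf unfolding r_def gfact_Suc
      by (simp add: field_simps power_divide)
    have rn: "0 \<le> r n" using gp assms unfolding r_def by simp
    have "norm (real (Suc n) ^ k * (\<phi> ^ Suc n / gfact g (Suc n))) = r n * norm (real n ^ k * (\<phi> ^ n / gfact g n))"
      using rn eq by (simp add: abs_mult)
    also have "\<dots> \<le> (1 + \<phi>) / 2 * norm (real n ^ k * (\<phi> ^ n / gfact g n))"
      using N0[of n] n by (intro mult_right_mono) auto
    finally show "norm (real (Suc n) ^ k * (\<phi> ^ Suc n / gfact g (Suc n))) \<le> (1 + \<phi>) / 2 * norm (real n ^ k * (\<phi> ^ n / gfact g n))" .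
  qed
qed

end



lemma pm_integral:
  fixes p f :: "nat \<Rightarrow> real"
  assumes p: "\<And>n. 0 \<le> p n" and s: "summable (\<lambda>n. p n * \<bar>f n\<bar>)"
  shows "integrable (point_measure UNIV (\<lambda>n. ennreal (p n))) f"
    and "integral\<^sup>L (point_measure UNIV (\<lambda>n. ennreal (p n))) f = (\<Sum>n. p n * f n)"
proof -
  have i: "integrable (count_space UNIV) (\<lambda>n. p n *\<^sub>R f n)"
    unfolding integrable_count_space_nat_iff using s p by (simp add: abs_mult)
  show "integrable (point_measure UNIV (\<lambda>n. ennreal (p n))) f"
    unfolding point_measure_def using p i by (subst integrable_density) auto
  show "integral\<^sup>L (point_measure UNIV (\<lambda>n. ennreal (p n))) f = (\<Sum>n. p n * f n)"
    unfolding point_measure_def using p i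
    by (subst integral_density) (auto simp: integral_count_space_nat)
qed

lemma pm_prob:
  fixes p :: "nat \<Rightarrow> real"
  assumes p: "\<And>n. 0 \<le> p n" and s: "p sums 1"
  shows "prob_space (point_measure UNIV (\<lambda>n. ennreal (p n)))"
proof -
  let ?M = "point_measure UNIV (\<lambda>n. ennreal (p n))"
  have s1: "summable (\<lambda>n. p n * \<bar>1\<bar>)" using s by (simp add: sums_summable)
  have "integrable ?M (\<lambda>_. 1::real)" using pm_integral(1)[OF p s1] .
  hence "(\<integral>\<^sup>+x. ennreal (norm (1::real)) \<partial>?M) < \<infinity>" by (simp only: integrable_iff_bounded)
  hence fin: "emeasure ?M (space ?M) < \<infinity>" by simp
  have "integral\<^sup>L ?M (\<lambda>_. 1::real) = 1" using pm_integral(2)[OF p s1] s by (simp add: sums_iff)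
  hence "measure ?M (space ?M) = 1" by simp
  thus ?thesis using fin
    by (intro prob_spaceI) (simp add: emeasure_eq_ennreal_measure less_top)
qed




context gass begin

lemma W_nonneg: "0 \<le> \<phi> \<Longrightarrow> 0 \<le> \<phi> ^ n / gfact g n"
  using gfact_pos[of n] by simp

lemma Z_summable: "0 \<le> \<phi> \<Longrightarrow> \<phi> < 1 \<Longrightarrow> summable (\<lambda>n. \<phi> ^ n / gfact g n)"
  using summable_mom[of \<phi> 0] by simp

lemma Z_ge1: assumes "0 \<le> \<phi>" "\<phi> < 1" shows "1 \<le> Zpart g \<phi>"
proof -
  have "(\<Sum>n\<in>{0}. \<phi> ^ n / gfact g n) \<le> (\<Sum>n. \<phi> ^ n / gfact g n)"
    using Z_summable[OF assms] W_nonneg[OF assms(1)] by (intro sum_le_suminf) auto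
  thus ?thesis by (simp add: Zpart_def gfact_def)
qed

lemma Pdist_nonneg: "0 \<le> \<phi> \<Longrightarrow> \<phi> < 1 \<Longrightarrow> 0 \<le> Pdist g \<phi> n"
  unfolding Pdist_def using gfact_pos[of n] Z_ge1[of \<phi>] by simp

lemma Pdist_sums: assumes "0 \<le> \<phi>" "\<phi> < 1" shows "Pdist g \<phi> sums 1"
proof -
  have "(\<lambda>n. \<phi> ^ n / gfact g n / Zpart g \<phi>) sums (Zpart g \<phi> / Zpart g \<phi>)"
    using Z_summable[OF assms] unfolding Zpart_def by (intro sums_divide summable_sums)
  thus ?thesis using Z_ge1[OF assms] unfolding Pdist_def by (simp add: divide_divide_eq_left)
qed

lemma Pdist_mom_summable: assumes "0 \<le> \<phi>" "\<phi> < 1"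
  shows "summable (\<lambda>n. Pdist g \<phi> n * real n ^ k)"
proof -
  have "summable (\<lambda>n. real n ^ k * (\<phi> ^ n / gfact g n) / Zpart g \<phi>)"
    using summable_mom[OF assms] by (rule summable_divide)
  thus ?thesis unfolding Pdist_def by (simp add: field_simps)
qed

lemma Pdist_mom_le: assumes "0 \<le> \<phi>" "\<phi> \<le> \<phi>1" "\<phi>1 < 1"
  shows "(\<Sum>n. Pdist g \<phi> n * real n ^ k) \<le> (\<Sum>n. real n ^ k * (\<phi>1 ^ n / gfact g n))"
proof (rule suminf_le)
  fix n
  have z: "1 \<le> Zpart g \<phi>" using Z_ge1 assms by simp
  have gp: "0 < gfact g n" by (rule gfact_pos)
  have "Pdist g \<phi> n = (\<phi> ^ n / gfact g n) / Zpart g \<phi>" unfolding Pdist_def by simp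
  also have "\<dots> \<le> (\<phi> ^ n / gfact g n) / 1"
    using z W_nonneg[OF assms(1), of n] by (intro divide_left_mono) auto
  also have "\<dots> = \<phi> ^ n / gfact g n" by simp
  also have "\<dots> \<le> \<phi>1 ^ n / gfact g n"
    using gp assms by (intro divide_right_mono power_mono) auto
  finally have "Pdist g \<phi> n \<le> \<phi>1 ^ n / gfact g n" .
  hence "Pdist g \<phi> n * real n ^ k \<le> (\<phi>1 ^ n / gfact g n) * real n ^ k"
    by (rule mult_right_mono) simp
  thus "Pdist g \<phi> n * real n ^ k \<le> real n ^ k * (\<phi>1 ^ n / gfact g n)"
    by (simp only: mult.commute)
  show "summable (\<lambda>n. Pdist g \<phi> n * real n ^ k)" using Pdist_mom_summable assms by simp
  show "summable (\<lambda>n. real n ^ k * (\<phi>1 ^ n / gfact g n))" using summable_mom assms by simp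
qed

lemma Rmean_eq: assumes "0 \<le> \<phi>" "\<phi> < 1"
  shows "Rmean g \<phi> = (\<Sum>n. real n * (\<phi> ^ n / gfact g n)) / Zpart g \<phi>"
proof -
  have s: "summable (\<lambda>n. real n * (\<phi> ^ n / gfact g n))" using summable_mom[OF assms, of 1] by simp
  have "(\<lambda>n. real n * Pdist g \<phi> n) = (\<lambda>n. real n * (\<phi> ^ n / gfact g n) / Zpart g \<phi>)"
    by (rule ext) (simp add: Pdist_def)
  hence "Rmean g \<phi> = (\<Sum>n. real n * (\<phi> ^ n / gfact g n) / Zpart g \<phi>)" unfolding Rmean_def by simp
  also have "\<dots> = (\<Sum>n. real n * (\<phi> ^ n / gfact g n)) / Zpart g \<phi>" by (rule suminf_divide[OF s])
  finally show ?thesis .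
qed

end



context gass begin

lemma Rmean_sums: "0 \<le> \<phi> \<Longrightarrow> \<phi> < 1 \<Longrightarrow> (\<lambda>n. real n * Pdist g \<phi> n) sums Rmean g \<phi>"
  unfolding Rmean_def using Pdist_mom_summable[of \<phi> 1]
  by (intro summable_sums) (simp add: mult.commute)

lemma Z_strict: assumes "0 \<le> \<phi>" "\<phi> < \<psi>" "\<psi> < 1" shows "Zpart g \<phi> < Zpart g \<psi>"
proof -
  have s: "summable (\<lambda>n. \<psi> ^ n / gfact g n - \<phi> ^ n / gfact g n)"
    using assms by (intro summable_diff Z_summable) auto
  have "0 < (\<Sum>n. \<psi> ^ n / gfact g n - \<phi> ^ n / gfact g n)"
  proof (rule suminf_pos2[OF s, of 1])
    fix n show "0 \<le> \<psi> ^ n / gfact g n - \<phi> ^ n / gfact g n"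
      using gfact_pos[of n] assms by (auto intro!: divide_right_mono power_mono)
    show "0 < \<psi> ^ 1 / gfact g 1 - \<phi> ^ 1 / gfact g 1"
      using gfact_pos[of 1] assms by (simp add: divide_strict_right_mono)
  qed
  also have "\<dots> = Zpart g \<psi> - Zpart g \<phi>" unfolding Zpart_def
    using assms by (intro suminf_diff[symmetric] Z_summable) auto
  finally show ?thesis by simp
qed

lemma Rmean_zero: "Rmean g 0 = 0"
proof -
  have "(\<lambda>n. real n * Pdist g 0 n) = (\<lambda>n. 0)" by (rule ext) (simp add: Pdist_def power_0_left)
  thus ?thesis unfolding Rmean_def by simp
qed

lemma Rmean_pos: assumes "0 < \<psi>" "\<psi> < 1" shows "0 < Rmean g \<psi>"
  unfolding Rmean_def
proof (rule suminf_pos2[of _ 1])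
  show "summable (\<lambda>n. real n * Pdist g \<psi> n)" using Rmean_sums[of \<psi>] assms sums_summable by auto
  fix n show "0 \<le> real n * Pdist g \<psi> n" using Pdist_nonneg[of \<psi> n] assms by simp
  show "0 < real 1 * Pdist g \<psi> 1" unfolding Pdist_def
    using assms gfact_pos[of 1] Z_ge1[of \<psi>] by simp
qed

lemma Rmean_strict_pos: assumes "0 < \<phi>" "\<phi> < \<psi>" "\<psi> < 1" shows "Rmean g \<phi> < Rmean g \<psi>"
proof -
  define Q where "Q = \<psi> / \<phi>"
  define s where "s = Zpart g \<phi> / Zpart g \<psi>"
  have Q1: "1 < Q" unfolding Q_def using assms by simp
  have z1: "1 \<le> Zpart g \<phi>" using Z_ge1 assms by simp
  have zs: "Zpart g \<phi> < Zpart g \<psi>" using Z_strict assms by simp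
  have s0: "0 < s" "s < 1" unfolding s_def using z1 zs by auto
  define m where "m = log Q (1 / s)"
  have Qm: "Q powr m = 1 / s" unfolding m_def using Q1 s0 by simp
  have m0: "0 < m" using Q1 s0 unfolding m_def by simp
  have qp: "Pdist g \<psi> n = s * Q ^ n * Pdist g \<phi> n" for n
    unfolding Pdist_def s_def Q_def using assms gfact_pos[of n] z1 zs
    by (simp add: field_simps power_divide)
  let ?t = "\<lambda>n. (real n - m) * (Pdist g \<psi> n - Pdist g \<phi> n)"
  have tn: "?t n = (real n - m) * (s * Q ^ n - 1) * Pdist g \<phi> n" for n
    by (simp only: qp) algebra
  have sp: "Pdist g \<phi> sums 1" "Pdist g \<psi> sums 1" using Pdist_sums assms by auto
  have rp: "(\<lambda>n. real n * Pdist g \<phi> n) sums Rmean g \<phi>"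
    "(\<lambda>n. real n * Pdist g \<psi> n) sums Rmean g \<psi>" using Rmean_sums assms by auto
  have "(\<lambda>n. (real n * Pdist g \<psi> n - real n * Pdist g \<phi> n) - m * (Pdist g \<psi> n - Pdist g \<phi> n))
        sums ((Rmean g \<psi> - Rmean g \<phi>) - m * (1 - 1))"
    by (intro sums_diff sums_mult rp sp)
  hence ts: "?t sums (Rmean g \<psi> - Rmean g \<phi>)" by (simp add: algebra_simps)
  have "0 < suminf ?t"
  proof (rule suminf_pos2[of _ 0])
    show "summable ?t" using ts sums_summable by blast
    fix n
    have pn: "0 \<le> Pdist g \<phi> n" using Pdist_nonneg assms by simp
    have "0 \<le> (real n - m) * (s * Q ^ n - 1)"
    proof (cases "m \<le> real n")
      case True
      hence "Q powr m \<le> Q powr real n" using Q1 by simp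
      hence "1 / s \<le> Q ^ n" using Qm Q1 by (simp add: powr_realpow)
      hence "1 \<le> s * Q ^ n" using s0 by (simp add: field_simps)
      thus ?thesis using True by simp
    next
      case False
      hence "Q powr real n < Q powr m" using Q1 by simp
      hence "Q ^ n < 1 / s" using Qm Q1 by (simp add: powr_realpow)
      hence "s * Q ^ n < 1" using s0 by (simp add: field_simps)
      thus ?thesis using False by (simp add: mult_nonpos_nonpos)
    qed
    hence "0 \<le> (real n - m) * (s * Q ^ n - 1) * Pdist g \<phi> n" using pn by simp
    thus "0 \<le> ?t n" by (simp only: tn)
    have p0: "0 < Pdist g \<phi> 0" unfolding Pdist_def using z1 by (simp add: gfact_def)
    have "0 < m * (1 - s) * Pdist g \<phi> 0" using p0 m0 s0 by simp
    moreover have "(real 0 - m) * (s * Q ^ 0 - 1) * Pdist g \<phi> 0 = m * (1 - s) * Pdist g \<phi> 0"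
      by (simp add: algebra_simps)
    ultimately have "0 < (real 0 - m) * (s * Q ^ 0 - 1) * Pdist g \<phi> 0" by simp
    thus "0 < ?t 0" by (simp only: tn)
  qed
  thus ?thesis using ts sums_unique by fastforce
qed

lemma Rmean_strict: assumes "0 \<le> \<phi>" "\<phi> < \<psi>" "\<psi> < 1" shows "Rmean g \<phi> < Rmean g \<psi>"
proof (cases "\<phi> = 0")
  case True thus ?thesis using Rmean_pos[of \<psi>] assms Rmean_zero by simp
next
  case False thus ?thesis using Rmean_strict_pos[of \<phi> \<psi>] assms by simp
qed

lemma Rmean_mono_iff: assumes "0 \<le> \<phi>" "\<phi> < 1" "0 \<le> \<psi>" "\<psi> < 1"
  shows "Rmean g \<phi> < Rmean g \<psi> \<longleftrightarrow> \<phi> < \<psi>"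
  using Rmean_strict[of \<phi> \<psi>] Rmean_strict[of \<psi> \<phi>] assms
  by (cases \<phi> \<psi> rule: linorder_cases) auto

end



context gass begin

lemma Rmean_cont: assumes "b < 1" shows "continuous_on {0..b} (Rmean g)"
proof -
  define Zf where "Zf x = (\<Sum>n. (1 / gfact g n) * x ^ n)" for x :: real
  define Af where "Af x = (\<Sum>n. (real n / gfact g n) * x ^ n)" for x :: real
  have "continuous_on {0..b} (\<lambda>x. Af x / Zf x)"
  proof (intro continuous_at_imp_continuous_on ballI)
    fix x assume x: "x \<in> {0..b}"
    define K where "K = (1 + x) / 2"
    have K: "0 \<le> K" "K < 1" "norm x < norm K" using x assms unfolding K_def by auto
    have "summable (\<lambda>n. real n ^ 0 * (K ^ n / gfact g n))" by (rule summable_mom[OF K(1,2)])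
    hence s0: "summable (\<lambda>n. (1 / gfact g n) * K ^ n)" by simp
    have "summable (\<lambda>n. real n ^ 1 * (K ^ n / gfact g n))" by (rule summable_mom[OF K(1,2)])
    hence s1: "summable (\<lambda>n. (real n / gfact g n) * K ^ n)" by simp
    have cZ: "isCont Zf x" unfolding Zf_def by (rule isCont_powser[OF s0 K(3)])
    have cA: "isCont Af x" unfolding Af_def by (rule isCont_powser[OF s1 K(3)])
    have "Zf x = Zpart g x" unfolding Zf_def Zpart_def by simp
    hence "Zf x \<noteq> 0" using Z_ge1[of x] x assms by simp
    thus "isCont (\<lambda>x. Af x / Zf x) x" using cZ cA by (intro isCont_divide) auto
  qed
  moreover have "Af x / Zf x = Rmean g x" if "x \<in> {0..b}" for x
    using that assms Rmean_eq[of x] unfolding Af_def Zf_def Zpart_def by simp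
  ultimately show ?thesis using continuous_on_cong by (metis (no_types, lifting))
qed

lemma Rmean_unbounded: "\<exists>b. 0 \<le> b \<and> b < 1 \<and> c < Rmean g b"
proof -
  define M :: nat where "M = nat \<lceil>2 * c\<rceil> + 1"
  have M: "2 * c < real M" unfolding M_def by linarith
  define B where "B = (\<Sum>n<M. 1 / gfact g n)"
  have B0: "0 \<le> B" unfolding B_def using gfact_pos by (intro sum_nonneg) (simp add: less_imp_le)
  define K :: nat where "K = nat \<lceil>4 * B\<rceil> + 1"
  have K: "4 * B < real K" "1 \<le> K" unfolding K_def by linarith+
  define b where "b = 1 - 1 / (2 * real K)"
  have b: "0 \<le> b" "b < 1" unfolding b_def using K by (auto simp: field_simps)
  have "1 + real K * (- 1 / (2 * real K)) \<le> (1 + - 1 / (2 * real K)) ^ K"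
    using K by (intro Bernoulli_inequality) (auto simp: field_simps)
  hence bK: "1 / 2 \<le> b ^ K" unfolding b_def using K by simp
  have "(\<Sum>n<K. b ^ K) \<le> (\<Sum>n<K. b ^ n / gfact g n)"
  proof (intro sum_mono)
    fix n assume "n \<in> {..<K}"
    hence "b ^ K \<le> b ^ n" using b by (intro power_decreasing) auto
    also have "\<dots> \<le> b ^ n / gfact g n" using gfact_pos[of n] gfact_le1[of n] b
      by (simp add: le_divide_eq mult_left_le)
    finally show "b ^ K \<le> b ^ n / gfact g n" .
  qed
  also have "\<dots> \<le> Zpart g b" unfolding Zpart_def
    using Z_summable[OF b] W_nonneg[OF b(1)] by (intro sum_le_suminf) auto
  finally have "real K * b ^ K \<le> Zpart g b" by simp
  moreover have "real K / 2 \<le> real K * b ^ K" using bK K by simp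
  ultimately have ZK: "real K / 2 \<le> Zpart g b" by linarith
  have z1: "1 \<le> Zpart g b" using Z_ge1 b by simp
  have "(\<Sum>n<M. Pdist g b n) \<le> (\<Sum>n<M. 1 / gfact g n / Zpart g b)"
  proof (intro sum_mono)
    fix n
    have "b ^ n \<le> 1" using b by (intro power_le_one) auto
    thus "Pdist g b n \<le> 1 / gfact g n / Zpart g b" unfolding Pdist_def
      using gfact_pos[of n] z1 by (simp add: divide_right_mono frac_le)
  qed
  also have "\<dots> = B / Zpart g b" unfolding B_def by (simp add: sum_divide_distrib)
  also have "\<dots> < 1 / 2" using ZK K z1 B0 by (simp add: field_simps)
  finally have PM: "(\<Sum>n<M. Pdist g b n) < 1 / 2" .
  have s1: "(\<lambda>n. real M * Pdist g b n) sums (real M * 1)" using Pdist_sums[OF b] by (rule sums_mult)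
  have s2: "(\<lambda>n. if n < M then real M * Pdist g b n else 0) sums (\<Sum>n | n < M. real M * Pdist g b n)"
    by (rule sums_If_finite) simp
  have s3: "(\<lambda>n. real M * Pdist g b n - (if n < M then real M * Pdist g b n else 0))
      sums (real M * 1 - (\<Sum>n | n < M. real M * Pdist g b n))" by (rule sums_diff[OF s1 s2])
  have "real M * 1 - (\<Sum>n | n < M. real M * Pdist g b n) = real M * (1 - (\<Sum>n<M. Pdist g b n))"
    by (simp add: sum_distrib_left lessThan_def algebra_simps)
  also have "\<dots> \<ge> real M * (1 / 2)" using PM by (intro mult_left_mono) auto
  finally have lo: "real M * (1 / 2) \<le> real M * 1 - (\<Sum>n | n < M. real M * Pdist g b n)" .
  have "real M * 1 - (\<Sum>n | n < M. real M * Pdist g b n) \<le> Rmean g b"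
    unfolding Rmean_def
  proof (rule sums_le[OF _ s3])
    fix n show "real M * Pdist g b n - (if n < M then real M * Pdist g b n else 0) \<le> real n * Pdist g b n"
      using Pdist_nonneg[OF b, of n] by (auto intro: mult_right_mono)
    show "(\<lambda>n. real n * Pdist g b n) sums (\<Sum>n. real n * Pdist g b n)"
      using Rmean_sums[OF b] unfolding Rmean_def .
  qed
  thus ?thesis using lo M b by (intro exI[of _ b]) auto
qed

lemma Phi_props: assumes "0 \<le> c"
  shows "0 \<le> Phi g c" "Phi g c < 1" "Rmean g (Phi g c) = c"
proof -
  obtain b where b: "0 \<le> b" "b < 1" "c < Rmean g b" using Rmean_unbounded by blast
  have "\<exists>x. 0 \<le> x \<and> x \<le> b \<and> Rmean g x = c"
    using b assms Rmean_zero by (intro IVT' Rmean_cont) auto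
  then obtain x where x: "0 \<le> x" "x < 1" "Rmean g x = c" using b by auto
  have "Phi g c = x" unfolding Phi_def
  proof (rule the_equality)
    show "0 \<le> x \<and> x < 1 \<and> Rmean g x = c" using x by simp
    fix y assume y: "0 \<le> y \<and> y < 1 \<and> Rmean g y = c"
    show "y = x" using Rmean_mono_iff[of x y] Rmean_mono_iff[of y x] x y by force
  qed
  thus "0 \<le> Phi g c" "Phi g c < 1" "Rmean g (Phi g c) = c" using x by auto
qed

end



lemma cheb_prod:
  fixes M :: "nat \<Rightarrow> nat measure" and a :: "nat \<Rightarrow> real" and N :: nat and t :: real
  assumes PM: "\<And>i. prob_space (M i)" and SM: "\<And>i. sets (M i) = sets (count_space UNIV)"
    and I2: "\<And>i. integrable (M i) (\<lambda>n. real n ^ 2)" and t: "0 < t"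
    and A: "A \<subseteq> {\<omega> \<in> space (PiM {..<N} M).
            t \<le> \<bar>(\<Sum>i<N. a i * real (\<omega> i)) - (\<Sum>i<N. a i * (\<integral>n. real n \<partial>M i))\<bar>}"
  shows "measure (PiM {..<N} M) A
         \<le> (\<Sum>i<N. (a i)\<^sup>2 * (\<integral>n. real n ^ 2 \<partial>M i)) / t\<^sup>2"
proof -
  interpret product_prob_space M "{..<N}"
    by (intro product_prob_space.intro product_sigma_finite.intro product_prob_space_axioms.intro prob_space_imp_sigma_finite PM)
  have int_if: "integral\<^sup>L (M j) (\<lambda>x. if P then H x else 1) = (if P then integral\<^sup>L (M j) H else 1)"
    for j P and H :: "nat \<Rightarrow> real"
    using prob_space.prob_space[OF PM[of j]] by simp
  define m where "m i = (\<integral>n. real n \<partial>M i)" for i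
  define v where "v i = (\<integral>n. real n ^ 2 \<partial>M i)" for i
  have bm: "f \<in> borel_measurable (M i)" for f :: "nat \<Rightarrow> real" and i
    unfolding measurable_cong_sets[OF SM[of i] refl] by simp
  have I1: "integrable (M i) (\<lambda>n. real n)" for i
    using M.square_integrable_imp_integrable[OF bm I2] .
  have Ic: "integrable (M i) (\<lambda>n. real n - m i)" for i using I1 by simp
  have Ic2: "integrable (M i) (\<lambda>n. (real n - m i)^2)" for i
    using I1 I2 unfolding power2_diff by (intro Bochner_Integration.integrable_diff Bochner_Integration.integrable_add) auto
  have Ec: "(\<integral>n. real n - m i \<partial>M i) = 0" for i
    using I1 M.prob_space unfolding m_def by (simp add: prob_space.prob_space)
  have Ec2: "(\<integral>n. (real n - m i)^2 \<partial>M i) \<le> v i" for i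
  proof -
    have "(\<integral>n. (real n - m i)^2 \<partial>M i) = M.variance i (\<lambda>n. real n)" unfolding m_def ..
    also have "\<dots> = v i - (m i)^2" unfolding v_def m_def
      using I1 I2 by (subst M.variance_eq) auto
    finally show ?thesis by simp
  qed
  let ?P = "PiM {..<N} M"
  define Y where "Y i \<omega> = a i * (real (\<omega> i) - m i)" for i \<omega>
  have Ymeas[measurable]: "(\<lambda>\<omega>. real (\<omega> i)) \<in> borel_measurable ?P" if "i < N" for i
  proof -
    have "(\<lambda>\<omega>. \<omega> i) \<in> measurable ?P (M i)" using that by (intro measurable_component_singleton) auto
    thus ?thesis using bm[of real i] by (rule measurable_compose)
  qed
  have single: "integrable ?P (\<lambda>\<omega>. h (\<omega> i)) \<and> (\<integral>\<omega>. h (\<omega> i) \<partial>?P) = (\<integral>n. h n \<partial>M i)"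
    if i: "i < N" and hi: "integrable (M i) h" for i and h :: "nat \<Rightarrow> real"
  proof -
    define f where "f j x = (if j = i then h x else 1)" for j x
    have fi: "j \<in> {..<N} \<Longrightarrow> integrable (M j) (f j)" for j unfolding f_def using hi by (cases "j = i") auto
    have e: "(\<Prod>j\<in>{..<N}. f j (\<omega> j)) = h (\<omega> i)" for \<omega>
      unfolding f_def using i by (simp add: prod.delta)
    have "integrable ?P (\<lambda>\<omega>. \<Prod>j\<in>{..<N}. f j (\<omega> j))"
      by (rule product_integrable_prod) (auto intro: fi)
    moreover have "(\<integral>\<omega>. (\<Prod>j\<in>{..<N}. f j (\<omega> j)) \<partial>?P) = (\<Prod>j\<in>{..<N}. integral\<^sup>L (M j) (f j))"
      by (rule product_integral_prod) (auto intro: fi)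
    moreover have "(\<Prod>j\<in>{..<N}. integral\<^sup>L (M j) (f j)) = integral\<^sup>L (M i) h"
      unfolding f_def using i by (simp add: int_if prod.delta)
    ultimately show ?thesis unfolding e by simp
  qed
  have cross: "integrable ?P (\<lambda>\<omega>. Y i \<omega> * Y k \<omega>) \<and>
     (\<integral>\<omega>. Y i \<omega> * Y k \<omega> \<partial>?P) = (if i = k then (a i)^2 * (\<integral>n. (real n - m i)^2 \<partial>M i) else 0)"
    if ik: "i < N" "k < N" for i k
  proof (cases "i = k")
    case True
    have eqY: "(\<lambda>\<omega>. Y i \<omega> * Y k \<omega>) = (\<lambda>\<omega>. (a i)^2 * (real (\<omega> i) - m i)^2)"
      using True by (auto simp: Y_def power2_eq_square fun_eq_iff)
    show ?thesis unfolding eqY using single[OF ik(1) Ic2[of i]] True by simp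
  next
    case False
    define f where "f j x = (if j \<in> {i, k} then real x - m j else 1)" for j x
    have fi: "j \<in> {..<N} \<Longrightarrow> integrable (M j) (f j)" for j
      unfolding f_def using Ic by (cases "j \<in> {i,k}") auto
    have eqf: "(\<Prod>j\<in>{..<N}. f j (\<omega> j)) = (real (\<omega> i) - m i) * (real (\<omega> k) - m k)" for \<omega>
    proof -
      have "(\<Prod>j\<in>{..<N}. f j (\<omega> j)) = (\<Prod>j\<in>{i,k}. real (\<omega> j) - m j)"
        unfolding f_def using ik by (intro prod.mono_neutral_cong_right) auto
      thus ?thesis using False by simp
    qed
    have "integrable ?P (\<lambda>\<omega>. \<Prod>j\<in>{..<N}. f j (\<omega> j))"
      by (rule product_integrable_prod) (auto intro: fi)
    moreover have "(\<integral>\<omega>. (\<Prod>j\<in>{..<N}. f j (\<omega> j)) \<partial>?P) = (\<Prod>j\<in>{..<N}. integral\<^sup>L (M j) (f j))"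
      by (rule product_integral_prod) (auto intro: fi)
    moreover have "(\<Prod>j\<in>{..<N}. integral\<^sup>L (M j) (f j)) = 0"
      apply (rule prod_zero, simp) apply (rule bexI[of _ i]) using ik Ec[of i] by (auto simp: f_def[abs_def])
    ultimately have A: "integrable ?P (\<lambda>\<omega>. (real (\<omega> i) - m i) * (real (\<omega> k) - m k))"
      "(\<integral>\<omega>. (real (\<omega> i) - m i) * (real (\<omega> k) - m k) \<partial>?P) = 0" unfolding eqf by auto
    have eqY: "(\<lambda>\<omega>. Y i \<omega> * Y k \<omega>) = (\<lambda>\<omega>. (a i * a k) * ((real (\<omega> i) - m i) * (real (\<omega> k) - m k)))"
      by (auto simp: Y_def fun_eq_iff)
    show ?thesis unfolding eqY using A False by simp
  qed
  define S where "S \<omega> = (\<Sum>i<N. a i * real (\<omega> i))" for \<omega>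
  define \<mu> where "\<mu> = (\<Sum>i<N. a i * m i)"
  have Smeas[measurable]: "S \<in> borel_measurable ?P" unfolding S_def by measurable
  have SY: "S \<omega> - \<mu> = (\<Sum>i<N. Y i \<omega>)" for \<omega>
    unfolding S_def \<mu>_def Y_def by (simp add: sum_subtractf[symmetric] algebra_simps)
  have sq: "(S \<omega> - \<mu>)^2 = (\<Sum>i<N. \<Sum>k<N. Y i \<omega> * Y k \<omega>)" for \<omega>
    unfolding SY power2_eq_square by (simp add: sum_product)
  have Isq: "integrable ?P (\<lambda>\<omega>. (S \<omega> - \<mu>)^2)"
    unfolding sq by (intro Bochner_Integration.integrable_sum) (use cross in auto)
  have Esq: "(\<integral>\<omega>. (S \<omega> - \<mu>)^2 \<partial>?P) = (\<Sum>i<N. (a i)^2 * (\<integral>n. (real n - m i)^2 \<partial>M i))"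
  proof -
    have "(\<integral>\<omega>. (S \<omega> - \<mu>)^2 \<partial>?P) = (\<Sum>i<N. \<Sum>k<N. \<integral>\<omega>. Y i \<omega> * Y k \<omega> \<partial>?P)"
      unfolding sq
      apply (subst Bochner_Integration.integral_sum) apply (intro Bochner_Integration.integrable_sum) using cross apply auto[1]
      apply (intro sum.cong refl) apply (subst Bochner_Integration.integral_sum) using cross by auto
    also have "\<dots> = (\<Sum>i<N. \<Sum>k<N. (if i = k then (a i)^2 * (\<integral>n. (real n - m i)^2 \<partial>M i) else 0))"
      using cross by (intro sum.cong) auto
    also have "\<dots> = (\<Sum>i<N. (a i)^2 * (\<integral>n. (real n - m i)^2 \<partial>M i))"
      by (simp add: sum.delta)
    finally show ?thesis .
  qed
  have IY: "integrable ?P (Y i)" and EY: "(\<integral>\<omega>. Y i \<omega> \<partial>?P) = 0" if i: "i < N" for i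
  proof -
    have "integrable ?P (\<lambda>\<omega>. real (\<omega> i) - m i)" "(\<integral>\<omega>. real (\<omega> i) - m i \<partial>?P) = 0"
      using single[OF i Ic[of i]] Ec[of i] by auto
    thus "integrable ?P (Y i)" "(\<integral>\<omega>. Y i \<omega> \<partial>?P) = 0" unfolding Y_def by auto
  qed
  have ISY: "integrable ?P (\<lambda>\<omega>. \<Sum>i<N. Y i \<omega>)" by (intro Bochner_Integration.integrable_sum) (use IY in auto)
  have IS: "integrable ?P S"
  proof -
    have "integrable ?P (\<lambda>\<omega>. (\<Sum>i<N. Y i \<omega>) + \<mu>)" by (intro Bochner_Integration.integrable_add ISY P.integrable_const)
    moreover have "(\<lambda>\<omega>. (\<Sum>i<N. Y i \<omega>) + \<mu>) = S"
      by (rule ext) (use SY in \<open>simp add: algebra_simps\<close>)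
    ultimately show ?thesis by simp
  qed
  have IS2: "integrable ?P (\<lambda>\<omega>. (S \<omega>)^2)"
  proof -
    have "integrable ?P (\<lambda>\<omega>. (S \<omega> - \<mu>)^2 + 2 * \<mu> * S \<omega> - \<mu>^2)"
      by (intro Bochner_Integration.integrable_diff Bochner_Integration.integrable_add Bochner_Integration.integrable_mult_right Isq IS P.integrable_const)
    moreover have "(S \<omega> - \<mu>)^2 + 2 * \<mu> * S \<omega> - \<mu>^2 = (S \<omega>)^2" for \<omega>
      by (simp add: power2_diff)
    ultimately show ?thesis by simp
  qed
  have ES: "P.expectation S = \<mu>"
  proof -
    have "P.expectation (\<lambda>\<omega>. \<Sum>i<N. Y i \<omega>) = (\<Sum>i<N. P.expectation (Y i))"
      by (intro Bochner_Integration.integral_sum) (use IY in auto)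
    also have "\<dots> = 0" using EY by simp
    finally have "P.expectation (\<lambda>\<omega>. S \<omega> - \<mu>) = 0" unfolding SY .
    thus ?thesis using IS by (simp add: P.prob_space)
  qed
  have "P.prob {\<omega> \<in> space ?P. t \<le> \<bar>S \<omega> - P.expectation S\<bar>} \<le> P.variance S / t\<^sup>2"
    by (rule P.Chebyshev_inequality[OF Smeas IS2 t])
  also have "P.variance S = (\<Sum>i<N. (a i)^2 * (\<integral>n. (real n - m i)^2 \<partial>M i))"
    using Esq ES by simp
  also have "\<dots> \<le> (\<Sum>i<N. (a i)^2 * v i)"
    by (intro sum_mono mult_left_mono Ec2) simp
  finally have fin: "P.prob {\<omega> \<in> space ?P. t \<le> \<bar>S \<omega> - \<mu>\<bar>} \<le> (\<Sum>i<N. (a i)^2 * v i) / t\<^sup>2"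
    using t by (simp only: ES) (simp add: divide_right_mono)
  have "{\<omega> \<in> space ?P. t \<le> \<bar>S \<omega> - \<mu>\<bar>} \<in> sets ?P" by measurable
  moreover have "A \<subseteq> {\<omega> \<in> space ?P. t \<le> \<bar>S \<omega> - \<mu>\<bar>}" using A unfolding S_def \<mu>_def m_def .
  ultimately have "measure ?P A \<le> P.prob {\<omega> \<in> space ?P. t \<le> \<bar>S \<omega> - \<mu>\<bar>}"
    by (intro P.finite_measure_mono)
  thus ?thesis using fin unfolding v_def by linarith
qed




lemma riemann_split:
  fixes G :: "real \<Rightarrow> real"
  assumes c: "continuous_on {0..1} G" and nN: "n \<le> N" and N: "0 < N"
  shows "integral {0..real n / real N} G = (\<Sum>k<n. integral {real k / real N..real (Suc k) / real N} G)"
  using nN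
proof (induction n)
  case 0 thus ?case by simp
next
  case (Suc n)
  have sub: "{0..real (Suc n) / real N} \<subseteq> {0..1}" using Suc.prems N by (auto simp: field_simps)
  have int: "G integrable_on {0..real (Suc n) / real N}"
    by (rule integrable_continuous_interval) (rule continuous_on_subset[OF c sub])
  have "integral {0..real n / real N} G + integral {real n / real N..real (Suc n) / real N} G
      = integral {0..real (Suc n) / real N} G"
    by (rule Henstock_Kurzweil_Integration.integral_combine[OF _ _ int]) (auto simp: divide_right_mono)
  thus ?case using Suc by simp
qed

lemma riemann:
  fixes G :: "real \<Rightarrow> real"
  assumes c: "continuous_on {0..1} G"
  shows "(\<lambda>N. (\<Sum>k<N. G (real k / real N)) / real N) \<longlonglongrightarrow> integral {0..1} G"
proof (rule LIMSEQ_I)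
  fix r :: real assume r: "0 < r"
  have uc: "uniformly_continuous_on {0..1} G"
    using c by (intro compact_uniformly_continuous) auto
  obtain d where d: "0 < d" and dd: "\<And>x y. x \<in> {0..1} \<Longrightarrow> y \<in> {0..1} \<Longrightarrow> dist y x < d \<Longrightarrow> dist (G y) (G x) < r / 2"
    using uc r unfolding uniformly_continuous_on_def by (metis half_gt_zero)
  define n0 :: nat where "n0 = nat \<lceil>1 / d\<rceil> + 1"
  show "\<exists>no. \<forall>N\<ge>no. norm ((\<Sum>k<N. G (real k / real N)) / real N - integral {0..1} G) < r"
  proof (intro exI allI impI)
    fix N assume Nn: "n0 \<le> N"
    have N: "0 < N" using Nn unfolding n0_def by simp
    have "1 / d < real N" using Nn unfolding n0_def by linarith
    hence hN: "1 / real N < d" using d N by (simp add: field_simps)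
    have split: "integral {0..1} G = (\<Sum>k<N. integral {real k / real N..real (Suc k) / real N} G)"
      using riemann_split[OF c order_refl N] N by simp
    have each: "\<bar>integral {real k / real N..real (Suc k) / real N} G - G (real k / real N) / real N\<bar> \<le> (r / 2) / real N"
      if k: "k < N" for k
    proof -
      let ?a = "real k / real N" and ?b = "real (Suc k) / real N"
      have ab: "?a \<le> ?b" by (simp add: divide_right_mono)
      have sub: "{?a..?b} \<subseteq> {0..1}" using k N by (auto simp: field_simps)
      have int: "G integrable_on {?a..?b}"
        by (rule integrable_continuous_interval) (rule continuous_on_subset[OF c sub])
      have close: "\<bar>G y - G ?a\<bar> < r / 2" if y: "y \<in> {?a..?b}" for y
      proof -
        have "dist y ?a \<le> ?b - ?a" using y by (auto simp: dist_real_def)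
        also have "?b - ?a = 1 / real N" by (simp add: add_divide_distrib)
        finally have "dist y ?a < d" using hN by simp
        moreover have "0 \<le> ?a" by simp
        hence y0: "0 \<le> y" using y by (meson atLeastAtMost_iff order_trans)
        ultimately show ?thesis using dd[of ?a y] sub y ab y0 by (auto simp: dist_real_def)
      qed
      have len: "?b - ?a = 1 / real N" by (simp add: add_divide_distrib)
      have cu: "G y \<le> G ?a + r / 2" "G ?a - r / 2 \<le> G y" if "y \<in> {?a..?b}" for y
        using close[OF that] by (smt (verit))+
      have "integral {?a..?b} G \<le> integral {?a..?b} (\<lambda>_. G ?a + r / 2)"
        using cu by (intro integral_le int) auto
      also have "\<dots> = (G ?a + r / 2) / real N" using ab len by simp
      finally have u: "integral {?a..?b} G \<le> (G ?a + r / 2) / real N" .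
      have "integral {?a..?b} (\<lambda>_. G ?a - r / 2) \<le> integral {?a..?b} G"
        using cu by (intro integral_le int) auto
      moreover have "integral {?a..?b} (\<lambda>_. G ?a - r / 2) = (G ?a - r / 2) / real N" using ab len by simp
      ultimately have l: "(G ?a - r / 2) / real N \<le> integral {?a..?b} G" by simp
      show ?thesis using u l by (simp add: abs_le_iff diff_divide_distrib add_divide_distrib)
    qed
    have "\<bar>(\<Sum>k<N. G (real k / real N)) / real N - integral {0..1} G\<bar>
        = \<bar>\<Sum>k<N. (G (real k / real N) / real N - integral {real k / real N..real (Suc k) / real N} G)\<bar>"
      unfolding split by (simp add: sum_divide_distrib sum_subtractf)
    also have "\<dots> \<le> (\<Sum>k<N. \<bar>G (real k / real N) / real N - integral {real k / real N..real (Suc k) / real N} G\<bar>)"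
      by (rule sum_abs)
    also have "\<dots> \<le> (\<Sum>k<N. (r / 2) / real N)"
      using each by (intro sum_mono) (simp add: abs_minus_commute)
    also have "\<dots> = r / 2" using N by simp
    finally show "norm ((\<Sum>k<N. G (real k / real N)) / real N - integral {0..1} G) < r" using r by simp
  qed
qed




theorem mainTheorem6:
  fixes g :: "nat \<Rightarrow> real" and gstar :: real
    and J :: "'j set" and x \<beta> lam :: "'j \<Rightarrow> real"
    and c \<delta> :: real and G :: "real \<Rightarrow> real"
  assumes g_nonneg: "\<And>n. g n \<ge> 0"
    and g_zero: "\<And>n. g n = 0 \<longleftrightarrow> n = 0"
    and g_lip: "\<And>n. \<bar>g (Suc n) - g n\<bar> \<le> gstar"
    and g_mono: "mono g"
    and g_bdd: "g \<longlonglongrightarrow> 1"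
    and J_fin: "finite J"
    and x_range: "\<And>j. j \<in> J \<Longrightarrow> 0 \<le> x j \<and> x j < 1"
    and x_inj: "inj_on x J"
    and lam_pos: "\<And>j. j \<in> J \<Longrightarrow> lam j > 0"
    and Js_empty: "{j \<in> J. \<beta> j > 0} = {}"
    and c_nonneg: "0 \<le> c"
    and c_sub: "Jcrit J \<beta> lam \<noteq> {} \<Longrightarrow> c < Rmean g (1 / lambda_max J \<beta> lam)"
    and G_cont: "continuous_on UNIV G"
    and G_per: "\<And>y. G (y + 1) = G y"
    and \<delta>_pos: "\<delta> > 0"
  shows "(\<lambda>N. measure (RN g J x \<beta> lam c N)
            {\<xi> \<in> space (RN g J x \<beta> lam c N).
               \<bar>pairing_emp G N \<xi> - integral {0..1} (\<lambda>y. G y * c)\<bar> > \<delta>})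
         \<longlonglongrightarrow> 0"
proof -
  have gpos: "0 < g n" if "0 < n" for n
    using g_nonneg[of n] g_zero[of n] that by linarith
  have gle1: "g n \<le> 1" for n using incseq_le[OF g_mono g_bdd] .
  interpret gass g by (rule gass.intro) (auto intro: gpos gle1 g_bdd)
  define \<Phi>0 where "\<Phi>0 = Phi g c"
  have \<Phi>0: "0 \<le> \<Phi>0" "\<Phi>0 < 1" "Rmean g \<Phi>0 = c" using Phi_props[OF c_nonneg] by (auto simp: \<Phi>0_def)
  define J0 where "J0 = {j\<in>J. \<beta> j = 0}"
  have crit: "lam j * \<Phi>0 < 1" if j: "j \<in> J0" for j
  proof (cases "lam j \<le> 1")
    case True
    hence "lam j * \<Phi>0 \<le> 1 * \<Phi>0" using \<Phi>0 by (intro mult_right_mono) auto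
    thus ?thesis using \<Phi>0 by simp
  next
    case False
    hence jc: "j \<in> Jcrit J \<beta> lam" using j unfolding J0_def Jcrit_def by auto
    hence ne: "Jcrit J \<beta> lam \<noteq> {}" by auto
    have finJc: "finite (Jcrit J \<beta> lam)" using J_fin unfolding Jcrit_def by auto
    have lm: "lambda_max J \<beta> lam = Max (lam ` Jcrit J \<beta> lam)" using ne unfolding lambda_max_def by simp
    have lj: "lam j \<le> lambda_max J \<beta> lam" unfolding lm using finJc jc by (intro Max_ge) auto
    have lm1: "1 < lambda_max J \<beta> lam" using False lj by linarith
    define b where "b = 1 / lambda_max J \<beta> lam"
    have b: "0 \<le> b" "b < 1" using lm1 unfolding b_def by auto
    have "Rmean g \<Phi>0 < Rmean g b" using c_sub[OF ne] \<Phi>0 unfolding b_def by simp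
    hence "\<Phi>0 < b" using Rmean_mono_iff[OF \<Phi>0(1,2) b] by simp
    hence "\<Phi>0 * lambda_max J \<beta> lam < 1" using lm1 unfolding b_def by (simp add: field_simps)
    moreover have "lam j * \<Phi>0 \<le> lambda_max J \<beta> lam * \<Phi>0" using lj \<Phi>0 by (intro mult_right_mono) auto
    ultimately show ?thesis by (simp add: mult.commute)
  qed
  define \<phi>1 where "\<phi>1 = Max (insert \<Phi>0 ((\<lambda>j. lam j * \<Phi>0) ` J0))"
  have finJ0: "finite J0" using J_fin unfolding J0_def by auto
  have \<phi>1: "\<phi>1 < 1" "\<Phi>0 \<le> \<phi>1" "\<And>j. j \<in> J0 \<Longrightarrow> lam j * \<Phi>0 \<le> \<phi>1"
    unfolding \<phi>1_def using finJ0 crit \<Phi>0 by (auto intro: Max_ge)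
  have \<phi>1nn: "0 \<le> \<phi>1" using \<phi>1 \<Phi>0 by linarith
  define fug where "fug N k = site_fug g J x \<beta> lam c N k" for N k
  have ev1: "eventually (\<lambda>N. \<forall>j\<in>J. \<beta> j < 0 \<longrightarrow> lam j * real N powr \<beta> j \<le> 1) sequentially"
  proof (intro eventually_ball_finite J_fin ballI)
    fix j assume j: "j \<in> J"
    show "eventually (\<lambda>N. \<beta> j < 0 \<longrightarrow> lam j * real N powr \<beta> j \<le> 1) sequentially"
    proof (cases "\<beta> j < 0")
      case True
      have "(\<lambda>N. lam j * real N powr \<beta> j) \<longlonglongrightarrow> lam j * 0"
        by (intro tendsto_mult tendsto_const tendsto_neg_powr[OF True] filterlim_real_sequentially)
      hence "eventually (\<lambda>N. lam j * real N powr \<beta> j < 1) sequentially"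
        by (intro order_tendstoD(2)) auto
      thus ?thesis by eventually_elim auto
    qed simp
  qed
  have fugb: "eventually (\<lambda>N. 1 \<le> N \<and> (\<forall>k. 0 \<le> fug N k \<and> fug N k \<le> \<phi>1)) sequentially"
    using ev1 eventually_ge_at_top[of 1]
  proof eventually_elim
    case (elim N)
    have N: "0 < real N" using elim by simp
    have "0 \<le> fug N k \<and> fug N k \<le> \<phi>1" for k
    proof (cases "\<exists>j\<in>J. k = ksite (x j) N")
      case True
      define j0 where "j0 = (SOME j. j \<in> J \<and> k = ksite (x j) N)"
      have j0: "j0 \<in> J \<and> k = ksite (x j0) N" unfolding j0_def
        by (rule someI_ex) (use True in blast)
      have f: "fug N k = lam j0 * real N powr \<beta> j0 * \<Phi>0"
        unfolding fug_def site_fug_def using True by (simp add: j0_def Let_def \<Phi>0_def)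
      have b0: "\<beta> j0 \<le> 0" using Js_empty j0 by auto
      have l0: "0 < lam j0" using lam_pos j0 by simp
      have nn: "0 \<le> fug N k" unfolding f using l0 \<Phi>0 by simp
      show ?thesis
      proof (cases "\<beta> j0 = 0")
        case True
        hence "fug N k = lam j0 * \<Phi>0" unfolding f using N by simp
        moreover have "j0 \<in> J0" unfolding J0_def using True j0 by simp
        ultimately show ?thesis using \<phi>1(3) nn by simp
      next
        case False
        hence "lam j0 * real N powr \<beta> j0 \<le> 1" using elim(1) j0 b0 by auto
        hence "fug N k \<le> 1 * \<Phi>0" unfolding f using \<Phi>0 by (intro mult_right_mono) auto
        thus ?thesis using nn \<phi>1(2) by simp
      qed
    next
      case False
      hence "fug N k = \<Phi>0" unfolding fug_def site_fug_def by (simp add: \<Phi>0_def)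
      thus ?thesis using \<Phi>0 \<phi>1 by simp
    qed
    thus ?case using elim by simp
  qed
  obtain B where B: "\<And>y. y \<in> {0..1} \<Longrightarrow> \<bar>G y\<bar> \<le> B" and B0: "0 \<le> B"
  proof -
    have "compact (G ` {0..1})"
      by (intro compact_continuous_image continuous_on_subset[OF G_cont]) auto
    then obtain B' where "\<forall>z\<in>G ` {0..1}. norm z \<le> B'"
      using compact_imp_bounded bounded_iff by metis
    hence B': "\<And>y. y \<in> {0..1} \<Longrightarrow> \<bar>G y\<bar> \<le> B'" by auto
    show ?thesis
    proof (rule that[of "max B' 0"])
      fix y :: real assume "y \<in> {0..1}"
      thus "\<bar>G y\<bar> \<le> max B' 0" using B' by (meson max.coboundedI1)
    qed simp
  qed
  define A1 where "A1 = (\<Sum>n. real n ^ 1 * (\<phi>1 ^ n / gfact g n))"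
  define A2 where "A2 = (\<Sum>n. real n ^ 2 * (\<phi>1 ^ n / gfact g n))"
  have mom: "Rmean g \<phi> \<le> A1 \<and> 0 \<le> Rmean g \<phi>" if "0 \<le> \<phi>" "\<phi> \<le> \<phi>1" for \<phi>
  proof -
    have r: "Rmean g \<phi> = (\<Sum>n. Pdist g \<phi> n * real n ^ 1)" unfolding Rmean_def by (simp add: mult.commute)
    have "Rmean g \<phi> \<le> A1" unfolding r A1_def using that \<phi>1 by (intro Pdist_mom_le) auto
    moreover have "0 \<le> Rmean g \<phi>" unfolding r using that \<phi>1
      by (intro suminf_nonneg Pdist_mom_summable) (auto intro!: mult_nonneg_nonneg Pdist_nonneg)
    ultimately show ?thesis by simp
  qed
  define a where "a N k = G (real k / real N) / real N" for N k :: nat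
  have aB: "\<bar>a N k\<bar> \<le> B / real N" if "k < N" for N k
  proof -
    have "real k / real N \<in> {0..1}" using that by auto
    hence "\<bar>G (real k / real N)\<bar> \<le> B" by (rule B)
    thus ?thesis unfolding a_def by (simp add: divide_right_mono)
  qed
  define D where "D N = (\<lambda>j. ksite (x j) N) ` J" for N
  have nonD: "fug N k = \<Phi>0" if "k \<notin> D N" for N k
    using that unfolding fug_def site_fug_def D_def by (auto simp: \<Phi>0_def)
  define E where "E N = (\<Sum>k<N. a N k * (Rmean g (fug N k) - c))" for N
  define C where "C = real (card J) * (B * (A1 + c))"
  have Eb: "eventually (\<lambda>N. norm (E N) \<le> C / real N) sequentially"
    using fugb
  proof eventually_elim
    case (elim N)
    define K where "K = B / real N * (A1 + c)"
    have K0: "0 \<le> K" unfolding K_def using B0 mom[OF \<Phi>0(1) \<phi>1(2)] c_nonneg by simp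
    have "\<bar>E N\<bar> \<le> (\<Sum>k<N. \<bar>a N k * (Rmean g (fug N k) - c)\<bar>)" unfolding E_def by (rule sum_abs)
    also have "\<dots> \<le> (\<Sum>k<N. (if k \<in> D N then K else 0))"
    proof (intro sum_mono)
      fix k assume k: "k \<in> {..<N}"
      show "\<bar>a N k * (Rmean g (fug N k) - c)\<bar> \<le> (if k \<in> D N then K else 0)"
      proof (cases "k \<in> D N")
        case True
        have "\<bar>Rmean g (fug N k) - c\<bar> \<le> A1 + c" using mom[of "fug N k"] elim c_nonneg by auto
        hence "\<bar>a N k\<bar> * \<bar>Rmean g (fug N k) - c\<bar> \<le> B / real N * (A1 + c)"
          using aB[of k N] k by (intro mult_mono) auto
        thus ?thesis using True unfolding K_def by (simp add: abs_mult)
      next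
        case False thus ?thesis using nonD[OF False] \<Phi>0 by simp
      qed
    qed
    also have "\<dots> = (\<Sum>k\<in>{..<N} \<inter> D N. K)" by (rule sum.inter_restrict[OF finite_lessThan, symmetric])
    also have "\<dots> = real (card ({..<N} \<inter> D N)) * K" by simp
    also have "\<dots> \<le> real (card J) * K"
    proof (intro mult_right_mono K0)
      have "card ({..<N} \<inter> D N) \<le> card (D N)" unfolding D_def using J_fin by (intro card_mono) auto
      also have "\<dots> \<le> card J" unfolding D_def by (rule card_image_le[OF J_fin])
      finally show "real (card ({..<N} \<inter> D N)) \<le> real (card J)" by simp
    qed
    also have "\<dots> = C / real N" unfolding C_def K_def by simp
    finally show ?case by simp
  qed
  have E0: "E \<longlonglongrightarrow> 0" by (rule Lim_null_comparison[OF Eb lim_const_over_n])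
  have Rsum: "(\<lambda>N. \<Sum>k<N. a N k) \<longlonglongrightarrow> integral {0..1} G"
    using riemann[OF continuous_on_subset[OF G_cont]] by (simp add: a_def sum_divide_distrib)
  have L1: "(\<lambda>N. E N + c * (\<Sum>k<N. a N k)) \<longlonglongrightarrow> 0 + c * integral {0..1} G"
    by (intro tendsto_add tendsto_mult E0 Rsum tendsto_const)
  have eqf: "(\<lambda>N. E N + c * (\<Sum>k<N. a N k)) = (\<lambda>N. \<Sum>k<N. a N k * Rmean g (fug N k))"
    by (rule ext) (simp add: E_def sum_distrib_left sum.distrib[symmetric] algebra_simps)
  have eqI: "0 + c * integral {0..1} G = integral {0..1} (\<lambda>y. G y * c)"
    by (simp add: mult.commute)
  have mlim: "(\<lambda>N. \<Sum>k<N. a N k * Rmean g (fug N k)) \<longlonglongrightarrow> integral {0..1} (\<lambda>y. G y * c)"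
    using L1 unfolding eqf eqI .
  have evm: "eventually (\<lambda>N. \<bar>(\<Sum>k<N. a N k * Rmean g (fug N k)) - integral {0..1} (\<lambda>y. G y * c)\<bar> < \<delta> / 2) sequentially"
    using tendstoD[OF mlim, of "\<delta> / 2"] \<delta>_pos by (simp add: dist_real_def)
  define Kc where "Kc = B\<^sup>2 * A2 / (\<delta> / 2)\<^sup>2"
  have main: "eventually (\<lambda>N. norm (measure (RN g J x \<beta> lam c N)
            {\<xi> \<in> space (RN g J x \<beta> lam c N).
               \<bar>pairing_emp G N \<xi> - integral {0..1} (\<lambda>y. G y * c)\<bar> > \<delta>}) \<le> Kc / real N) sequentially"
    using fugb evm
  proof eventually_elim
    case (elim N)
    have N: "0 < real N" using elim by simp
    have fk: "0 \<le> fug N k" "fug N k < 1" "fug N k \<le> \<phi>1" for k using elim \<phi>1 by (auto intro: le_less_trans)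
    define M where "M k = point_measure UNIV (\<lambda>n. ennreal (Pdist g (fug N k) n))" for k
    have PM: "prob_space (M k)" for k
      unfolding M_def by (intro pm_prob Pdist_nonneg Pdist_sums fk)
    have SM: "sets (M k) = sets (count_space UNIV)" for k
      unfolding M_def by (rule sets_point_measure_count_space)
    have s2: "summable (\<lambda>n. Pdist g (fug N k) n * \<bar>real n ^ 2\<bar>)" for k
      using Pdist_mom_summable[OF fk(1,2), of k 2] by simp
    have s1: "summable (\<lambda>n. Pdist g (fug N k) n * \<bar>real n\<bar>)" for k
      using Pdist_mom_summable[OF fk(1,2), of k 1] by simp
    have I2: "integrable (M k) (\<lambda>n. real n ^ 2)" for k
      unfolding M_def by (rule pm_integral(1)[OF Pdist_nonneg[OF fk(1,2)] s2])
    have m_eq: "(\<integral>n. real n \<partial>M k) = Rmean g (fug N k)" for k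
      unfolding M_def Rmean_def using pm_integral(2)[OF Pdist_nonneg[OF fk(1,2)] s1, of k]
      by (simp add: mult.commute)
    have v_le: "(\<integral>n. real n ^ 2 \<partial>M k) \<le> A2" for k
    proof -
      have "(\<integral>n. real n ^ 2 \<partial>M k) = (\<Sum>n. Pdist g (fug N k) n * real n ^ 2)"
        unfolding M_def by (rule pm_integral(2)[OF Pdist_nonneg[OF fk(1,2)] s2])
      also have "\<dots> \<le> A2" unfolding A2_def using fk \<phi>1 by (intro Pdist_mom_le) auto
      finally show ?thesis .
    qed
    have v_nn: "0 \<le> (\<integral>n. real n ^ 2 \<partial>M k)" for k by (intro integral_nonneg_AE) auto
    have RN_eq: "RN g J x \<beta> lam c N = PiM {..<N} M"
      unfolding RN_def M_def fug_def by simp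
    have pe: "pairing_emp G N \<xi> = (\<Sum>k<N. a N k * real (\<xi> k))" for \<xi>
      unfolding pairing_emp_def a_def by (simp add: sum_distrib_left algebra_simps)
    let ?I = "integral {0..1} (\<lambda>y. G y * c)"
    have sub: "{\<xi> \<in> space (RN g J x \<beta> lam c N). \<bar>pairing_emp G N \<xi> - ?I\<bar> > \<delta>}
       \<subseteq> {\<omega> \<in> space (PiM {..<N} M).
            \<delta> / 2 \<le> \<bar>(\<Sum>i<N. a N i * real (\<omega> i)) - (\<Sum>i<N. a N i * (\<integral>n. real n \<partial>M i))\<bar>}"
    proof safe
      fix \<xi> assume \<xi>: "\<xi> \<in> space (RN g J x \<beta> lam c N)" "\<delta> < \<bar>pairing_emp G N \<xi> - ?I\<bar>"
      show "\<xi> \<in> space (PiM {..<N} M)" using \<xi> RN_eq by simp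
      have "(\<Sum>i<N. a N i * (\<integral>n. real n \<partial>M i)) = (\<Sum>k<N. a N k * Rmean g (fug N k))"
        by (simp add: m_eq)
      thus "\<delta> / 2 \<le> \<bar>(\<Sum>i<N. a N i * real (\<xi> i)) - (\<Sum>i<N. a N i * (\<integral>n. real n \<partial>M i))\<bar>"
        using \<xi>(2) elim(2) unfolding pe by linarith
    qed
    have "measure (RN g J x \<beta> lam c N)
            {\<xi> \<in> space (RN g J x \<beta> lam c N). \<bar>pairing_emp G N \<xi> - ?I\<bar> > \<delta>}
          \<le> (\<Sum>i<N. (a N i)\<^sup>2 * (\<integral>n. real n ^ 2 \<partial>M i)) / (\<delta> / 2)\<^sup>2"
      unfolding RN_eq using \<delta>_pos sub unfolding RN_eq
      by (intro cheb_prod[OF PM SM I2]) auto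
    also have "\<dots> \<le> (\<Sum>i<N. (B / real N)\<^sup>2 * A2) / (\<delta> / 2)\<^sup>2"
    proof (intro divide_right_mono sum_mono mult_mono v_le v_nn)
      fix i assume i: "i \<in> {..<N}"
      show "(a N i)\<^sup>2 \<le> (B / real N)\<^sup>2"
        using aB[of i N] i by (metis abs_ge_zero lessThan_iff power2_abs power_mono)
    qed auto
    also have "\<dots> = Kc / real N" unfolding Kc_def using N by (simp add: power2_eq_square field_simps)
    finally show ?case by simp
  qed
  show ?thesis by (rule Lim_null_comparison[OF main lim_const_over_n])
qed

end
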